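(* Let $\lambda=(\lambda_1,\dots,\lambda_l)$ be a partition and $0\le k\le l-1$. If $\alpha=(\alpha_1,\alpha_2,\dots)$ (finitely many nonzero entries) satisfies $\mathrm{wt}\,\alpha<N_{\lambda,k}$, then $\partial^\alpha s_\lambda\big(\sum_{i=1}^k[x_i]\big)=0$ (for $k=0$ this means $\partial^\alpha s_\lambda(0)=0$).
   Context: For $t=(t_1,t_2,\dots)$ define $p_m(t)$ by $\exp(\sum_{m\ge1}t_mk^m)=\sum_{m\ge0}p_m(t)k^m$, $p_m=0$ for $m<0$; $s_\lambda(t)=\det(p_{\lambda_i-i+j}(t))_{1\le i,j\le l}$. $[x]=(x,x^2/2,x^3/3,\dots)$. $\partial_i=\partial/\partial t_i$, $\partial^\alpha=\partial_1^{\alpha_1}\partial_2^{\alpha_2}\cdots$, $\mathrm{wt}\,\alpha=\sum_i i\alpha_i$. $N_{\lambda,k}=\lambda_{k+1}+\dots+\lambda_l$. *)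

theory Defs
  imports Complex_Main "HOL-Analysis.Derivative" "HOL-Computational_Algebra.Formal_Power_Series" "Jordan_Normal_Form.Determinant"
begin

text \<open>Times t = (t_1, t_2, ...) are modelled as functions nat => complex; the entry t 0 is unused.\<close>

definition schur_p :: "int \<Rightarrow> (nat \<Rightarrow> complex) \<Rightarrow> complex" where
  "schur_p m t = (if m < 0 then 0 else
     fps_nth (fps_exp 1 oo Abs_fps (\<lambda>n. if n = 0 then 0 else t n)) (nat m))"

text \<open>s_lambda(t) = det (p_{lambda_i - i + j}(t))_{1<=i,j<=l}, written 0-indexed.\<close>
definition schur_s :: "nat list \<Rightarrow> (nat \<Rightarrow> complex) \<Rightarrow> complex" where
  "schur_s lam t = det (mat (length lam) (length lam)
     (\<lambda>(i, j). schur_p (int (lam ! i) - int i + int j) t))"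

definition is_partition :: "nat list \<Rightarrow> bool" where
  "is_partition lam \<longleftrightarrow> sorted_wrt (\<ge>) lam \<and> (\<forall>a \<in> set lam. 0 < a)"

definition pdiff :: "nat \<Rightarrow> ((nat \<Rightarrow> complex) \<Rightarrow> complex) \<Rightarrow> ((nat \<Rightarrow> complex) \<Rightarrow> complex)" where
  "pdiff i F = (\<lambda>t. deriv (\<lambda>z. F (t(i := z))) (t i))"

fun multi_pdiff :: "(nat \<Rightarrow> nat) \<Rightarrow> nat \<Rightarrow> ((nat \<Rightarrow> complex) \<Rightarrow> complex) \<Rightarrow> ((nat \<Rightarrow> complex) \<Rightarrow> complex)" where
  "multi_pdiff alpha 0 F = F"
| "multi_pdiff alpha (Suc n) F = multi_pdiff alpha n ((pdiff (Suc n) ^^ alpha (Suc n)) F)"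

definition wt :: "(nat \<Rightarrow> nat) \<Rightarrow> nat \<Rightarrow> nat" where
  "wt alpha n = (\<Sum>i=1..n. i * alpha i)"

definition bracket_sum :: "nat \<Rightarrow> (nat \<Rightarrow> complex) \<Rightarrow> nat \<Rightarrow> complex" where
  "bracket_sum k x = (\<lambda>m. if m = 0 then 0 else (\<Sum>i=1..k. x i ^ m / of_nat m))"

definition N_lk :: "nat list \<Rightarrow> nat \<Rightarrow> nat" where
  "N_lk lam k = sum_list (drop k lam)"

end

theory Submission
  imports Defs
begin

definition TT :: "(nat \<Rightarrow> complex) \<Rightarrow> complex fps" where
  "TT t = Abs_fps (\<lambda>n. if n = 0 then 0 else t n)"
definition EE :: "(nat \<Rightarrow> complex) \<Rightarrow> complex fps" where
  "EE t = fps_exp 1 oo TT t"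
definition bb :: "(nat \<Rightarrow> complex) \<Rightarrow> nat \<Rightarrow> complex" where
  "bb t n = of_nat n * (if n = 0 then 0 else t n)"

lemma schur_p_EE: "schur_p m t = (if m < 0 then 0 else fps_nth (EE t) (nat m))"
  by (simp add: schur_p_def EE_def TT_def)

lemma EE_0[simp]: "fps_nth (EE t) (0) = 1"
  by (simp add: EE_def fps_compose_nth)

lemma EE_deriv: "fps_deriv (EE t) = EE t * fps_deriv (TT t)"
  unfolding EE_def by (subst fps_compose_deriv) (auto simp: TT_def fps_compose_mult_distrib)

lemma EE_rec: "of_nat (Suc m) * fps_nth (EE t) (Suc m) = (\<Sum>j=0..m. fps_nth (EE t) (j) * bb t (Suc (m - j)))"
proof -
  have "fps_nth (fps_deriv (EE t)) m = fps_nth (EE t * fps_deriv (TT t)) m" by (simp add: EE_deriv)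
  then show ?thesis
    by (simp add: fps_mult_nth bb_def TT_def Suc_diff_le mult.commute)
qed


lemma S1_lemma:
  fixes g :: "nat \<Rightarrow> complex"
  assumes "i \<le> m"
  shows "(\<Sum>j=0..m. (if i \<le> j then g (j-i) else 0) * h (m - j)) = (\<Sum>j=0..m-i. g j * h (m - i - j))"
proof -
  have "(\<Sum>j=0..m. (if i \<le> j then g (j-i) else 0) * h (m - j)) = (\<Sum>j=i..m. g (j-i) * h (m - j))"
    by (rule sum.mono_neutral_cong_right) auto
  also have "\<dots> = (\<Sum>j=0+i..(m-i)+i. g (j-i) * h (m - j))" using assms by simp
  also have "\<dots> = (\<Sum>j=0..m-i. g j * h (m - i - j))"
    by (subst sum.shift_bounds_cl_nat_ivl) (simp add: diff_diff_add add.commute)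
  finally show ?thesis .
qed

lemma S2_lemma:
  fixes g :: "nat \<Rightarrow> complex"
  assumes "i \<ge> 1"
  shows "(\<Sum>j=0..m. g j * (if Suc (m-j) = i then c else 0)) = (if i \<le> Suc m then g (Suc m - i) * c else 0)"
proof (cases "i \<le> Suc m")
  case True
  then have "(\<Sum>j=0..m. g j * (if Suc (m-j) = i then c else 0)) = (\<Sum>j\<in>{Suc m - i}. g j * (if Suc (m-j) = i then c else 0))"
    using assms by (intro sum.mono_neutral_cong_right) auto
  then show ?thesis using True assms by simp
next
  case False
  then have "\<forall>j\<in>{0..m}. Suc (m-j) \<noteq> i" by auto
  then show ?thesis using False by simp
qed

lemma bb_deriv: "((\<lambda>w. bb (t(i:=w)) p) has_field_derivative (if p = i \<and> i \<noteq> 0 then of_nat i else 0)) (at z)"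
proof (cases "p = i \<and> i \<noteq> 0")
  case True
  then show ?thesis unfolding bb_def by (auto intro!: derivative_eq_intros)
next
  case False
  then have "(\<lambda>w. bb (t(i:=w)) p) = (\<lambda>w. bb t p)" unfolding bb_def by auto
  moreover have "(if p = i \<and> i \<noteq> 0 then of_nat i else 0) = (0::complex)" using False by simp
  ultimately show ?thesis by (simp only:) (rule DERIV_const)
qed

lemma EE_deriv_t:
  assumes "i \<ge> 1"
  shows "((\<lambda>z. fps_nth (EE (t(i:=z))) n) has_field_derivative
           (if i \<le> n then fps_nth (EE (t(i:=z))) (n - i) else 0)) (at z)"
proof (induction n arbitrary: z rule: less_induct)
  case (less n)
  show ?case
  proof (cases n)
    case 0
    then show ?thesis using assms by simp
  next
    case (Suc m)
    define a where "a w j = fps_nth (EE (t(i:=w))) j" for w j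
    have eq: "(\<lambda>w. fps_nth (EE (t(i:=w))) n) = (\<lambda>w. (\<Sum>j=0..m. a w j * bb (t(i:=w)) (Suc (m-j))) / of_nat (Suc m))"
    proof
      fix w
      show "fps_nth (EE (t(i:=w))) n = (\<Sum>j=0..m. a w j * bb (t(i:=w)) (Suc (m-j))) / of_nat (Suc m)"
        using EE_rec[of m "t(i:=w)"] unfolding a_def Suc
        by (simp add: field_simps del: of_nat_Suc)
    qed
    have D: "((\<lambda>w. (\<Sum>j=0..m. a w j * bb (t(i:=w)) (Suc (m-j)))) has_field_derivative
       (\<Sum>j=0..m. (if i \<le> j then a z (j-i) else 0) * bb (t(i:=z)) (Suc(m-j)) + a z j * (if Suc(m-j) = i then of_nat i else 0))) (at z)"
    proof (rule DERIV_sum)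
      fix j assume j: "j \<in> {0..m}"
      have IH: "((\<lambda>w. a w j) has_field_derivative (if i \<le> j then a z (j-i) else 0)) (at z)"
      proof -
        have "j < n" using j Suc by auto
        from less.IH[OF this, of z] show ?thesis by (simp only: a_def)
      qed
      have "((\<lambda>w. a w j * bb (t(i:=w)) (Suc (m-j))) has_field_derivative
         (if i \<le> j then a z (j-i) else 0) * bb (t(i:=z)) (Suc(m-j)) + a z j * (if Suc(m-j) = i \<and> i \<noteq> 0 then of_nat i else 0)) (at z)"
        using DERIV_mult[OF IH bb_deriv[of t i "Suc (m-j)" z]] by (simp add: mult.commute)
      then show "((\<lambda>w. a w j * bb (t(i:=w)) (Suc (m-j))) has_field_derivative
         (if i \<le> j then a z (j-i) else 0) * bb (t(i:=z)) (Suc(m-j)) + a z j * (if Suc(m-j) = i then of_nat i else 0)) (at z)"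
        using assms by simp
    qed
    have val: "(\<Sum>j=0..m. (if i \<le> j then a z (j-i) else 0) * bb (t(i:=z)) (Suc(m-j)) + a z j * (if Suc(m-j) = i then of_nat i else 0))
       = of_nat (Suc m) * (if i \<le> n then a z (n - i) else 0)"
    proof -
      have s1: "(\<Sum>j=0..m. (if i \<le> j then a z (j-i) else 0) * bb (t(i:=z)) (Suc(m-j))) =
          (if i \<le> m then of_nat (Suc (m-i)) * a z (Suc (m-i)) else 0)"
      proof (cases "i \<le> m")
        case True
        have "(\<Sum>j=0..m. (if i \<le> j then a z (j-i) else 0) * bb (t(i:=z)) (Suc(m-j))) =
           (\<Sum>j=0..m-i. a z j * bb (t(i:=z)) (Suc (m - i - j)))"
          using S1_lemma[OF True, of "a z" "\<lambda>p. bb (t(i:=z)) (Suc p)"] by simp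
        also have "\<dots> = of_nat (Suc (m-i)) * a z (Suc (m-i))"
          using EE_rec[of "m-i" "t(i:=z)"] unfolding a_def by simp
        finally show ?thesis using True by simp
      next
        case False
        then show ?thesis by (intro trans[OF sum.neutral]) auto
      qed
      have s2: "(\<Sum>j=0..m. a z j * (if Suc(m-j) = i then of_nat i else 0)) = (if i \<le> Suc m then a z (Suc m - i) * of_nat i else 0)"
        by (rule S2_lemma[OF assms])
      show ?thesis
        unfolding sum.distrib s1 s2 Suc
        using assms by (auto simp: Suc_diff_le algebra_simps of_nat_diff le_Suc_eq)
    qed
    show ?thesis
      unfolding eq
      using DERIV_cdivide[OF D, of "of_nat (Suc m)"] val unfolding a_def
      by (simp del: of_nat_Suc)
  qed
qed


lemma schur_p_deriv:
  assumes "i \<ge> 1"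
  shows "((\<lambda>z. schur_p m (t(i:=z))) has_field_derivative schur_p (m - int i) (t(i:=z))) (at z)"
proof (cases "m < 0")
  case True
  then show ?thesis by (simp add: schur_p_EE)
next
  case False
  have d: "((\<lambda>z. fps_nth (EE (t(i:=z))) (nat m)) has_field_derivative
           (if i \<le> nat m then fps_nth (EE (t(i:=z))) (nat m - i) else 0)) (at z)"
    by (rule EE_deriv_t[OF assms])
  have "(if i \<le> nat m then fps_nth (EE (t(i:=z))) (nat m - i) else 0) = schur_p (m - int i) (t(i:=z))"
    using False by (auto simp: schur_p_EE nat_diff_distrib)
  then show ?thesis using d False by (simp add: schur_p_EE)
qed

definition DD :: "nat \<Rightarrow> (nat \<Rightarrow> int) \<Rightarrow> (nat \<Rightarrow> complex) \<Rightarrow> complex" where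
  "DD l c t = det (mat l l (\<lambda>(i, j). schur_p (c i + int j) t))"

lemma DD_expand:
  "DD l c t = (\<Sum>p\<in>{p. p permutes {0..<l}}. signof p * (\<Prod>r=0..<l. schur_p (c r + int (p r)) t))"
  unfolding DD_def
  apply (subst det_def'[of _ l], simp)
  apply (intro sum.cong refl arg_cong2[where f="(*)"] prod.cong)
  apply (auto dest: permutes_in_image)
  done

lemma schur_s_DD: "schur_s lam = DD (length lam) (\<lambda>i. int (lam!i) - int i)"
  unfolding schur_s_def DD_def by (auto intro!: arg_cong[where f=det] cong_mat simp: fun_eq_iff)

lemma DD_deriv:
  assumes "i \<ge> 1"
  shows "((\<lambda>z. DD l c (t(i:=z))) has_field_derivative (\<Sum>r<l. DD l (c(r := c r - int i)) (t(i:=z)))) (at z)"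
proof -
  let ?P = "{p. p permutes {0..<l}}"
  let ?A = "{0..<l}"
  have d: "((\<lambda>z. DD l c (t(i:=z))) has_field_derivative
     (\<Sum>p\<in>?P. signof p * (\<Sum>x\<in>?A. schur_p (c x + int (p x) - int i) (t(i:=z)) *
          (\<Prod>y\<in>?A-{x}. schur_p (c y + int (p y)) (t(i:=z)))))) (at z)"
    unfolding DD_expand
    by (intro DERIV_sum DERIV_cmult has_field_derivative_prod schur_p_deriv assms)
  have e: "(\<Sum>p\<in>?P. signof p * (\<Sum>x\<in>?A. schur_p (c x + int (p x) - int i) (t(i:=z)) *
          (\<Prod>y\<in>?A-{x}. schur_p (c y + int (p y)) (t(i:=z)))))
     = (\<Sum>r<l. DD l (c(r := c r - int i)) (t(i:=z)))"
  proof -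
    have "\<And>p x. x \<in> ?A \<Longrightarrow> schur_p (c x + int (p x) - int i) (t(i:=z)) *
          (\<Prod>y\<in>?A-{x}. schur_p (c y + int (p y)) (t(i:=z)))
        = (\<Prod>r\<in>?A. schur_p ((c(x := c x - int i)) r + int (p r)) (t(i:=z)))"
    proof -
      fix p x assume x: "x \<in> ?A"
      have "(\<Prod>r\<in>?A. schur_p ((c(x := c x - int i)) r + int (p r)) (t(i:=z)))
          = schur_p ((c(x := c x - int i)) x + int (p x)) (t(i:=z)) *
            (\<Prod>r\<in>?A-{x}. schur_p ((c(x := c x - int i)) r + int (p r)) (t(i:=z)))"
        using x by (subst prod.remove[of _ x]) auto
      also have "\<dots> = schur_p (c x + int (p x) - int i) (t(i:=z)) *
          (\<Prod>y\<in>?A-{x}. schur_p (c y + int (p y)) (t(i:=z)))"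
        by (auto intro!: prod.cong simp: algebra_simps)
      finally show "schur_p (c x + int (p x) - int i) (t(i:=z)) *
          (\<Prod>y\<in>?A-{x}. schur_p (c y + int (p y)) (t(i:=z)))
        = (\<Prod>r\<in>?A. schur_p ((c(x := c x - int i)) r + int (p r)) (t(i:=z)))" by simp
    qed
    then have "(\<Sum>p\<in>?P. signof p * (\<Sum>x\<in>?A. schur_p (c x + int (p x) - int i) (t(i:=z)) *
          (\<Prod>y\<in>?A-{x}. schur_p (c y + int (p y)) (t(i:=z)))))
       = (\<Sum>p\<in>?P. \<Sum>x\<in>?A. signof p * (\<Prod>r\<in>?A. schur_p ((c(x := c x - int i)) r + int (p r)) (t(i:=z))))"
      by (simp add: sum_distrib_left)
    also have "\<dots> = (\<Sum>x\<in>?A. \<Sum>p\<in>?P. signof p * (\<Prod>r\<in>?A. schur_p ((c(x := c x - int i)) r + int (p r)) (t(i:=z))))"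
      by (rule sum.swap)
    also have "\<dots> = (\<Sum>r<l. DD l (c(r := c r - int i)) (t(i:=z)))"
      unfolding DD_expand by (simp add: atLeast0LessThan)
    finally show ?thesis .
  qed
  show ?thesis using d e by simp
qed


definition FL :: "nat \<Rightarrow> (nat \<Rightarrow> int) list \<Rightarrow> (nat \<Rightarrow> complex) \<Rightarrow> complex" where
  "FL l L = (\<lambda>t. sum_list (map (\<lambda>c. DD l c t) L))"

definition stp :: "nat \<Rightarrow> nat \<Rightarrow> (nat \<Rightarrow> int) list \<Rightarrow> (nat \<Rightarrow> int) list" where
  "stp l m L = concat (map (\<lambda>c. map (\<lambda>r. c(r := c r - int m)) [0..<l]) L)"

lemma FL_deriv:
  assumes "m \<ge> 1"
  shows "((\<lambda>z. FL l L (t(m:=z))) has_field_derivative FL l (stp l m L) (t(m:=z))) (at z)"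
proof (induction L)
  case Nil
  then show ?case by (simp add: FL_def stp_def)
next
  case (Cons c L)
  have e: "FL l (stp l m (c # L)) (t(m:=z)) = (\<Sum>r<l. DD l (c(r := c r - int m)) (t(m:=z))) + FL l (stp l m L) (t(m:=z))"
    by (simp add: FL_def stp_def interv_sum_list_conv_sum_set_nat atLeast0LessThan)
  have "((\<lambda>z. DD l c (t(m:=z)) + FL l L (t(m:=z))) has_field_derivative
      (\<Sum>r<l. DD l (c(r := c r - int m)) (t(m:=z))) + FL l (stp l m L) (t(m:=z))) (at z)"
    by (intro DERIV_add DD_deriv assms Cons)
  then show ?case unfolding e by (simp only: FL_def list.map sum_list.Cons)
qed

lemma pdiff_FL: "m \<ge> 1 \<Longrightarrow> pdiff m (FL l L) = FL l (stp l m L)"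
  unfolding pdiff_def
proof
  fix t assume "m \<ge> 1"
  from FL_deriv[OF this, of l L t "t m"]
  show "deriv (\<lambda>z. FL l L (t(m := z))) (t m) = FL l (stp l m L) t"
    by (simp add: DERIV_imp_deriv)
qed

definition PP :: "nat \<Rightarrow> (nat \<Rightarrow> int) \<Rightarrow> nat \<Rightarrow> (nat \<Rightarrow> int) list \<Rightarrow> bool" where
  "PP l c0 w L \<longleftrightarrow> (\<forall>c\<in>set L. \<exists>a. (\<forall>r. c r = c0 r - int (a r)) \<and> (\<Sum>r<l. a r) = w)"

lemma PP_stp:
  assumes H: "PP l c0 w L" shows "PP l c0 (w + m) (stp l m L)"
  unfolding PP_def
proof (intro ballI)
  fix c' assume "c' \<in> set (stp l m L)"
  then obtain c r where c: "c \<in> set L" and r: "r < l" and c': "c' = c(r := c r - int m)"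
    by (auto simp: stp_def)
  obtain a where a: "\<forall>r. c r = c0 r - int (a r)" "sum a {..<l} = w" using H c unfolding PP_def by blast
  let ?a = "a(r := a r + m)"
  have "\<forall>r'. c' r' = c0 r' - int (?a r')" using a(1) c' by auto
  moreover have "sum ?a {..<l} = w + m"
  proof -
    have 1: "sum ?a {..<l} = ?a r + sum ?a ({..<l} - {r})" using r by (subst sum.remove[of _ r]) auto
    have 2: "sum ?a ({..<l} - {r}) = sum a ({..<l} - {r})" by (intro sum.cong) auto
    have 3: "sum a {..<l} = a r + sum a ({..<l} - {r})" using r by (subst sum.remove[of _ r]) auto
    show ?thesis using 1 2 3 a(2) by simp
  qed
  ultimately show "\<exists>a. (\<forall>r. c' r = c0 r - int (a r)) \<and> (\<Sum>r<l. a r) = w + m" by blast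
qed

lemma pow_FL: "m \<ge> 1 \<Longrightarrow> PP l c0 w L \<Longrightarrow> \<exists>L'. (pdiff m ^^ e) (FL l L) = FL l L' \<and> PP l c0 (w + e * m) L'"
proof (induction e)
  case 0
  then show ?case by auto
next
  case (Suc e)
  then obtain L' where "(pdiff m ^^ e) (FL l L) = FL l L'" "PP l c0 (w + e * m) L'" by blast
  moreover have "PP l c0 (w + e * m + m) (stp l m L')" by (rule PP_stp) fact
  ultimately show ?case using Suc.prems
    by (intro exI[of _ "stp l m L'"]) (auto simp: pdiff_FL algebra_simps)
qed

lemma wt_Suc: "wt alpha (Suc n) = wt alpha n + Suc n * alpha (Suc n)"
  by (simp add: wt_def)

lemma multi_FL: "PP l c0 w L \<Longrightarrow> \<exists>L'. multi_pdiff alpha n (FL l L) = FL l L' \<and> PP l c0 (w + wt alpha n) L'"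
proof (induction n arbitrary: w L)
  case 0
  then show ?case by (auto simp: wt_def)
next
  case (Suc n)
  obtain L1 where L1: "(pdiff (Suc n) ^^ alpha (Suc n)) (FL l L) = FL l L1" "PP l c0 (w + alpha (Suc n) * Suc n) L1"
    using pow_FL[of "Suc n", OF _ Suc.prems] by auto
  obtain L2 where "multi_pdiff alpha n (FL l L1) = FL l L2" "PP l c0 (w + alpha (Suc n) * Suc n + wt alpha n) L2"
    using Suc.IH[OF L1(2)] by blast
  then show ?case using L1 by (intro exI[of _ L2]) (auto simp: wt_Suc algebra_simps)
qed


lemma fps_deriv_prod_gen:
  fixes f :: "'i \<Rightarrow> 'a::comm_ring_1 fps"
  assumes "finite A"
  shows "fps_deriv (\<Prod>i\<in>A. f i) = (\<Sum>i\<in>A. fps_deriv (f i) * (\<Prod>j\<in>A-{i}. f j))"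
  using assms
proof (induction A rule: finite_induct)
  case empty
  then show ?case by simp
next
  case (insert x A)
  have eq: "insert x A - {y} = insert x (A - {y})" if "y \<in> A" for y
    using insert.hyps that by auto
  have "(\<Sum>i\<in>insert x A. fps_deriv (f i) * (\<Prod>j\<in>insert x A-{i}. f j)) =
      fps_deriv (f x) * (\<Prod>j\<in>A. f j) + (\<Sum>i\<in>A. fps_deriv (f i) * (f x * (\<Prod>j\<in>A-{i}. f j)))"
    using insert.hyps
    by (auto simp: eq prod.insert_remove intro!: sum.cong arg_cong2[where f="(+)"])
  also have "\<dots> = fps_deriv (\<Prod>i\<in>insert x A. f i)"
    using insert.hyps insert.IH by (simp add: sum_distrib_left algebra_simps)
  finally show ?case by simp
qed

definition QQ :: "nat \<Rightarrow> (nat \<Rightarrow> complex) \<Rightarrow> complex fps" where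
  "QQ k x = (\<Prod>i\<in>{1..k}. 1 - fps_const (x i) * fps_X)"

definition VV :: "complex \<Rightarrow> complex fps" where
  "VV y = Abs_fps (\<lambda>n. y ^ Suc n)"

lemma VV_mult: "VV y * (1 - fps_const y * fps_X) = fps_const y"
proof -
  have "VV y * (1 - fps_const y * fps_X) = VV y - fps_const y * (fps_X * VV y)" by (simp add: algebra_simps)
  also have "\<dots> = fps_const y"
  proof (rule fps_ext)
    fix n show "fps_nth (VV y - fps_const y * (fps_X * VV y)) n = fps_nth (fps_const y) n"
      by (cases n) (auto simp: VV_def)
  qed
  finally show ?thesis .
qed


lemma QQ_Suc: "QQ (Suc k) x = QQ k x - fps_const (x (Suc k)) * (fps_X * QQ k x)"
proof -
  have "QQ (Suc k) x = QQ k x * (1 - fps_const (x (Suc k)) * fps_X)"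
    unfolding QQ_def by (simp add: prod.cl_ivl_Suc mult.commute)
  then show ?thesis by (simp add: algebra_simps)
qed

lemma QQ_nth0: "fps_nth (QQ k x) 0 = 1"
  by (induction k) (auto simp: QQ_Suc, simp add: QQ_def)

lemma QQ_nth_big: "r > k \<Longrightarrow> fps_nth (QQ k x) r = 0"
proof (induction k arbitrary: r)
  case 0
  then show ?case by (simp add: QQ_def)
next
  case (Suc k)
  then show ?case by (auto simp: QQ_Suc)
qed

lemma TT_bracket_deriv: "fps_deriv (TT (bracket_sum k x)) = (\<Sum>i\<in>{1..k}. VV (x i))"
proof (rule fps_ext)
  fix n
  show "fps_nth (fps_deriv (TT (bracket_sum k x))) n = fps_nth (\<Sum>i\<in>{1..k}. VV (x i)) n"
    by (simp add: TT_def bracket_sum_def VV_def fps_sum_nth sum_distrib_left del: of_nat_Suc)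
qed

lemma EE_QQ: "EE (bracket_sum k x) * QQ k x = 1"
proof -
  let ?E = "EE (bracket_sum k x)"
  let ?A = "{1..k}"
  let ?f = "\<lambda>i. 1 - fps_const (x i) * fps_X"
  have Qd: "fps_deriv (QQ k x) = (\<Sum>i\<in>?A. - fps_const (x i) * (\<Prod>j\<in>?A-{i}. ?f j))"
    unfolding QQ_def by (subst fps_deriv_prod_gen) auto
  have TQ: "fps_deriv (TT (bracket_sum k x)) * QQ k x = (\<Sum>i\<in>?A. fps_const (x i) * (\<Prod>j\<in>?A-{i}. ?f j))"
  proof -
    have "fps_deriv (TT (bracket_sum k x)) * QQ k x = (\<Sum>i\<in>?A. VV (x i) * QQ k x)"
      by (simp add: TT_bracket_deriv sum_distrib_right)
    also have "\<dots> = (\<Sum>i\<in>?A. fps_const (x i) * (\<Prod>j\<in>?A-{i}. ?f j))"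
    proof (rule sum.cong[OF refl])
      fix i assume i: "i \<in> ?A"
      have "QQ k x = ?f i * (\<Prod>j\<in>?A-{i}. ?f j)" unfolding QQ_def using i by (subst prod.remove[of _ i]) auto
      then show "VV (x i) * QQ k x = fps_const (x i) * (\<Prod>j\<in>?A-{i}. ?f j)"
        using VV_mult[of "x i"] by (simp add: mult.assoc[symmetric])
    qed
    finally show ?thesis .
  qed
  have "fps_deriv (?E * QQ k x) = ?E * (fps_deriv (TT (bracket_sum k x)) * QQ k x + fps_deriv (QQ k x))"
    by (simp add: EE_deriv algebra_simps)
  also have "fps_deriv (TT (bracket_sum k x)) * QQ k x + fps_deriv (QQ k x) = 0"
    unfolding TQ Qd sum.distrib[symmetric] by (intro sum.neutral ballI) (simp add: fps_const_neg[symmetric] del: fps_const_neg)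
  finally have "fps_deriv (?E * QQ k x) = 0" by simp
  then have "?E * QQ k x = fps_const (fps_nth (?E * QQ k x) 0)" by (simp only: fps_deriv_eq_0_iff)
  also have "fps_nth (?E * QQ k x) 0 = 1" by (simp add: QQ_nth0)
  finally show ?thesis by simp
qed


lemma rec_h:
  fixes n :: int
  assumes "n \<ge> 1"
  shows "schur_p n (bracket_sum k x) = - (\<Sum>r=1..k. fps_nth (QQ k x) r * schur_p (n - int r) (bracket_sum k x))"
proof -
  define m where "m = nat n"
  have m: "m \<ge> 1" "n = int m" using assms by (auto simp: m_def)
  let ?h = "\<lambda>j. schur_p j (bracket_sum k x)"
  let ?g = "\<lambda>r. fps_nth (QQ k x) r * ?h (int m - int r)"
  have "0 = fps_nth (QQ k x * EE (bracket_sum k x)) m" using EE_QQ[of k x] m by (simp add: mult.commute)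
  also have "\<dots> = (\<Sum>r=0..m. ?g r)"
    unfolding fps_mult_nth by (intro sum.cong refl) (simp add: schur_p_EE nat_diff_distrib')
  also have "\<dots> = (\<Sum>r=0..m+k. ?g r)"
    by (rule sum.mono_neutral_left) (auto simp: schur_p_EE)
  also have "\<dots> = (\<Sum>r=0..k. ?g r)"
    by (rule sum.mono_neutral_right) (auto simp: QQ_nth_big)
  also have "\<dots> = ?g 0 + (\<Sum>r=1..k. ?g r)"
    by (simp add: sum.atLeast_Suc_atMost)
  finally show ?thesis using m by (simp add: QQ_nth0 eq_neg_iff_add_eq_0)
qed

function bet :: "(nat \<Rightarrow> complex) \<Rightarrow> nat \<Rightarrow> int \<Rightarrow> nat \<Rightarrow> complex" where
  "bet q k c s = (if c \<le> 0 then (if int s = - c then 1 else 0)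
      else - (\<Sum>r\<in>{1..k}. q r * bet q k (c - int r) s))"
  by auto
termination by (relation "measure (\<lambda>(q,k,c,s). nat c)") auto

declare bet.simps[simp del]

lemma bet_supp_hi: "c \<ge> 1 - int k \<Longrightarrow> s \<ge> k \<Longrightarrow> bet q k c s = 0"
proof (induction q k c s rule: bet.induct)
  case (1 q k c s)
  show ?case
  proof (cases "c \<le> 0")
    case True
    then show ?thesis using 1 by (subst bet.simps) auto
  next
    case False
    then show ?thesis using 1 by (subst bet.simps) (auto intro!: sum.neutral)
  qed
qed

lemma bet_supp_lo: "c \<le> 0 \<Longrightarrow> bet q k c s \<noteq> 0 \<Longrightarrow> int s = - c"
  by (subst (asm) bet.simps) (auto split: if_splits)

lemma bet_expand:
  fixes j :: nat
  assumes "j < l"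
  shows "schur_p (c + int j) (bracket_sum k x) =
    (\<Sum>s<l. bet (fps_nth (QQ k x)) k c s * schur_p (int j - int s) (bracket_sum k x))"
  using assms
proof (induction "nat c" arbitrary: c j rule: less_induct)
  case less
  let ?q = "fps_nth (QQ k x)"
  let ?h = "\<lambda>n. schur_p n (bracket_sum k x)"
  show ?case
  proof (cases "c \<le> 0")
    case True
    have "(\<Sum>s<l. bet ?q k c s * ?h (int j - int s)) = (\<Sum>s<l. if s = nat (-c) then ?h (int j - int s) else 0)"
      using True by (intro sum.cong refl) (subst bet.simps, auto)
    also have "\<dots> = (if nat (-c) < l then ?h (int j + c) else 0)"
      using True by (simp add: sum.delta)
    also have "\<dots> = ?h (c + int j)"
      using True less.prems by (auto simp: schur_p_EE add.commute)
    finally show ?thesis by simp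
  next
    case False
    have "?h (c + int j) = - (\<Sum>r=1..k. ?q r * ?h (c + int j - int r))"
      using False by (intro rec_h) auto
    also have "\<dots> = - (\<Sum>r=1..k. ?q r * (\<Sum>s<l. bet ?q k (c - int r) s * ?h (int j - int s)))"
    proof -
      have "\<And>r. r \<in> {1..k} \<Longrightarrow> ?h (c + int j - int r) = (\<Sum>s<l. bet ?q k (c - int r) s * ?h (int j - int s))"
      proof -
        fix r assume r: "r \<in> {1..k}"
        have "nat (c - int r) < nat c" using r False by auto
        from less.hyps[OF this less.prems] show "?h (c + int j - int r) = (\<Sum>s<l. bet ?q k (c - int r) s * ?h (int j - int s))"
          by (simp add: algebra_simps)
      qed
      then show ?thesis by simp
    qed
    also have "\<dots> = (\<Sum>s<l. (- (\<Sum>r=1..k. ?q r * bet ?q k (c - int r) s)) * ?h (int j - int s))"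
      by (simp add: sum_distrib_left sum_distrib_right sum_negf[symmetric] mult.assoc) (rule sum.swap)
    also have "\<dots> = (\<Sum>s<l. bet ?q k c s * ?h (int j - int s))"
      using False by (intro sum.cong refl) (subst (2) bet.simps, simp)
    finally show ?thesis .
  qed
qed


lemma subset_sum_ge:
  fixes f :: "nat \<Rightarrow> int"
  assumes L: "L \<subseteq> {0..<l}" "card L = l - k" and kl: "k < l"
    and anti: "\<And>i j. i \<le> j \<Longrightarrow> j < l \<Longrightarrow> f j \<le> f i"
  shows "(\<Sum>i\<in>{k..<l}. f i) \<le> (\<Sum>i\<in>L. f i)"
proof -
  let ?K = "{k..<l}"
  have fL: "finite L" using L(1) finite_subset by blast
  have 1: "(\<Sum>i\<in>L. f i) = (\<Sum>i\<in>L \<inter> ?K. f i) + (\<Sum>i\<in>L - ?K. f i)"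
    using fL by (rule sum.Int_Diff)
  have 2: "(\<Sum>i\<in>?K. f i) = (\<Sum>i\<in>?K \<inter> L. f i) + (\<Sum>i\<in>?K - L. f i)"
    by (rule sum.Int_Diff) simp
  have cA: "card (L - ?K) = card L - card (L \<inter> ?K)" using fL by (intro card_Diff_subset_Int) auto
  have cB: "card (?K - L) = card ?K - card (?K \<inter> L)" by (intro card_Diff_subset_Int) auto
  have cc: "card (L - ?K) = card (?K - L)" using cA cB L(2) by (simp add: Int_commute)
  have A: "of_nat (card (L - ?K)) * f k \<le> (\<Sum>i\<in>L - ?K. f i)"
    by (rule sum_bounded_below) (use L(1) kl in \<open>auto intro!: anti\<close>)
  have B: "(\<Sum>i\<in>?K - L. f i) \<le> of_nat (card (?K - L)) * f k"
    by (rule sum_bounded_above) (auto intro!: anti)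
  show ?thesis using 1 2 A B cc by (simp add: Int_commute)
qed

lemma comb:
  fixes f :: "nat \<Rightarrow> int" and a p :: "nat \<Rightarrow> nat"
  assumes p: "p permutes {0..<l}" and kl: "k < l"
    and anti: "\<And>i j. i \<le> j \<Longrightarrow> j < l \<Longrightarrow> f j \<le> f i"
    and H: "\<And>i. i < l \<Longrightarrow> k \<le> p i \<Longrightarrow> f i - int (a i) = - int (p i)"
  shows "(\<Sum>i\<in>{k..<l}. f i + int i) \<le> (\<Sum>i<l. int (a i))"
proof -
  define L where "L = {i\<in>{0..<l}. k \<le> p i}"
  have img: "p ` {0..<l} = {0..<l}" using p by (rule permutes_image)
  have inj: "inj_on p L" using permutes_inj[OF p] by (auto intro: inj_on_subset)
  have pL: "p ` L = {k..<l}"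
  proof
    show "p ` L \<subseteq> {k..<l}" unfolding L_def using img by auto
    show "{k..<l} \<subseteq> p ` L"
    proof
      fix s assume s: "s \<in> {k..<l}"
      then have "s \<in> p ` {0..<l}" using img by auto
      then obtain i where "i \<in> {0..<l}" "s = p i" by auto
      then show "s \<in> p ` L" using s unfolding L_def by auto
    qed
  qed
  have cardL: "card L = l - k" using card_image[OF inj] pL by simp
  have sub: "L \<subseteq> {0..<l}" unfolding L_def by auto
  have "(\<Sum>i\<in>L. int (a i)) = (\<Sum>i\<in>L. f i + int (p i))"
  proof (intro sum.cong refl)
    fix i assume "i \<in> L"
    then have "f i - int (a i) = - int (p i)" using H unfolding L_def by auto
    then show "int (a i) = f i + int (p i)" by linarith
  qed
  also have "\<dots> = (\<Sum>i\<in>L. f i) + (\<Sum>i\<in>L. int (p i))" by (simp add: sum.distrib)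
  also have "(\<Sum>i\<in>L. int (p i)) = (\<Sum>s\<in>{k..<l}. int s)"
    using sum.reindex[OF inj, of int] pL by simp
  finally have e: "(\<Sum>i\<in>L. int (a i)) = (\<Sum>i\<in>L. f i) + (\<Sum>s\<in>{k..<l}. int s)" .
  have "(\<Sum>i\<in>{k..<l}. f i) \<le> (\<Sum>i\<in>L. f i)"
    by (rule subset_sum_ge[OF sub cardL kl anti])
  moreover have "(\<Sum>i\<in>L. int (a i)) \<le> (\<Sum>i<l. int (a i))"
    using sub by (intro sum_mono2) auto
  ultimately show ?thesis using e by (simp add: sum.distrib)
qed


lemma DD_factor:
  "DD l c (bracket_sum k x) = det (mat l l (\<lambda>(i,s). bet (fps_nth (QQ k x)) k (c i) s)) *
     det (mat l l (\<lambda>(s,j). schur_p (int j - int s) (bracket_sum k x)))"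
proof -
  let ?B = "mat l l (\<lambda>(i,s). bet (fps_nth (QQ k x)) k (c i) s)"
  let ?W = "mat l l (\<lambda>(s,j). schur_p (int j - int s) (bracket_sum k x))"
  have "mat l l (\<lambda>(i,j). schur_p (c i + int j) (bracket_sum k x)) = ?B * ?W"
  proof (rule eq_matI)
    fix i j assume i: "i < dim_row (?B * ?W)" and j: "j < dim_col (?B * ?W)"
    then have il: "i < l" and jl: "j < l" by auto
    show "mat l l (\<lambda>(i,j). schur_p (c i + int j) (bracket_sum k x)) $$ (i, j) = (?B * ?W) $$ (i, j)"
      using il jl by (simp add: scalar_prod_def bet_expand[OF jl] atLeast0LessThan)
  qed auto
  then show ?thesis unfolding DD_def by (simp add: det_mult[of _ l])
qed

lemma detB_zero:
  fixes f :: "nat \<Rightarrow> int" and a :: "nat \<Rightarrow> nat"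
  assumes kl: "k < l"
    and anti: "\<And>i j. i \<le> j \<Longrightarrow> j < l \<Longrightarrow> f j \<le> f i"
    and cdef: "\<And>i. i < l \<Longrightarrow> c i = f i - int (a i)"
    and big: "(\<Sum>i<l. int (a i)) < (\<Sum>i\<in>{k..<l}. f i + int i)"
  shows "det (mat l l (\<lambda>(i,s). bet q k (c i) s)) = 0"
proof -
  have zero: "signof p * (\<Prod>i=0..<l. mat l l (\<lambda>(i,s). bet q k (c i) s) $$ (i, p i)) = 0"
    if p: "p permutes {0..<l}" for p
  proof -
    have pi: "\<And>i. i < l \<Longrightarrow> p i < l" using permutes_in_image[OF p] by auto
    have "(\<Prod>i=0..<l. bet q k (c i) (p i)) = 0"
    proof (rule ccontr)
      assume "(\<Prod>i=0..<l. bet q k (c i) (p i)) \<noteq> 0"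
      then have nz: "\<And>i. i < l \<Longrightarrow> bet q k (c i) (p i) \<noteq> 0" by auto
      have H: "f i - int (a i) = - int (p i)" if "i < l" "k \<le> p i" for i
      proof -
        have "\<not> c i \<ge> 1 - int k" using bet_supp_hi[of k "c i" "p i" q] nz[OF that(1)] that(2) by auto
        then have "c i \<le> 0" by auto
        then have "int (p i) = - c i" using bet_supp_lo nz[OF that(1)] by blast
        then show ?thesis using cdef[OF that(1)] by simp
      qed
      have "(\<Sum>i\<in>{k..<l}. f i + int i) \<le> (\<Sum>i<l. int (a i))"
        by (rule comb[OF p kl anti H])
      then show False using big by simp
    qed
    then show ?thesis using pi by (simp)
  qed
  have "det (mat l l (\<lambda>(i,s). bet q k (c i) s)) = (\<Sum>p\<in>{p. p permutes {0..<l}}.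
     signof p * (\<Prod>i=0..<l. mat l l (\<lambda>(i,s). bet q k (c i) s) $$ (i, p i)))"
    by (rule det_def') simp
  also have "\<dots> = 0" using zero by (intro sum.neutral) blast
  finally show ?thesis .
qed

lemma sum_list_drop: "sum_list (drop k xs) = (\<Sum>i\<in>{k..<length xs}. xs ! i)"
proof (cases "k \<le> length xs")
  case True
  have "sum_list (drop k xs) = (\<Sum>i=0..<length xs - k. xs ! (k + i))"
    by (simp add: sum_list_sum_nth)
  also have "\<dots> = (\<Sum>i\<in>{k..<length xs}. xs ! i)"
    using True sum.shift_bounds_nat_ivl[of "\<lambda>i. xs ! i" 0 k "length xs - k"] by (simp add: add.commute)
  finally show ?thesis .
next
  case False
  then show ?thesis by simp
qed

theorem proposition2p3:
  fixes lam :: "nat list" and k n :: nat and alpha :: "nat \<Rightarrow> nat" and x :: "nat \<Rightarrow> complex"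
  assumes "is_partition lam"
    and "k < length lam"
    and "\<forall>i > n. alpha i = 0"
    and "wt alpha n < N_lk lam k"
  shows "multi_pdiff alpha n (schur_s lam) (bracket_sum k x) = 0"
proof -
  define l where "l = length lam"
  define c0 where "c0 = (\<lambda>i. int (lam ! i) - int i)"
  define f where "f = (\<lambda>i. int (lam ! i) - int i)"
  have kl: "k < l" using assms(2) l_def by simp
  have anti: "f j \<le> f i" if "i \<le> j" "j < l" for i j
  proof (cases "i = j")
    case False
    then have "lam ! j \<le> lam ! i" using assms(1) that sorted_wrt_nth_less[of "(\<ge>)" lam i j]
      unfolding is_partition_def l_def by auto
    then show ?thesis unfolding f_def using that by simp
  qed simp
  have s: "schur_s lam = FL l [c0]"
    unfolding schur_s_DD FL_def l_def c0_def by (simp add: fun_eq_iff)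
  have P0: "PP l c0 0 [c0]" unfolding PP_def by (auto intro!: exI[of _ "\<lambda>_. 0"])
  obtain L' where L': "multi_pdiff alpha n (FL l [c0]) = FL l L'" "PP l c0 (0 + wt alpha n) L'"
    using multi_FL[OF P0] by blast
  have N: "int (N_lk lam k) = (\<Sum>i\<in>{k..<l}. f i + int i)"
    unfolding N_lk_def sum_list_drop f_def l_def by simp
  have "DD l c (bracket_sum k x) = 0" if c: "c \<in> set L'" for c
  proof -
    obtain a where a: "\<forall>r. c r = c0 r - int (a r)" "(\<Sum>r<l. a r) = wt alpha n"
      using L'(2) c unfolding PP_def by auto
    have big: "(\<Sum>i<l. int (a i)) < (\<Sum>i\<in>{k..<l}. f i + int i)"
      using assms(4) a(2) N by (simp flip: of_nat_sum)
    have "det (mat l l (\<lambda>(i,s). bet (fps_nth (QQ k x)) k (c i) s)) = 0"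
      by (rule detB_zero[OF kl anti _ big]) (use a(1) in \<open>auto simp: c0_def f_def\<close>)
    then show ?thesis unfolding DD_factor by simp
  qed
  then have "\<forall>c\<in>set L'. DD l c (bracket_sum k x) = 0" by blast
  then have "sum_list (map (\<lambda>c. DD l c (bracket_sum k x)) L') = 0" by (induction L') auto
  then show ?thesis unfolding s L'(1) by (simp only: FL_def)
qed

end
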